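(* Let $d\ge3$ be an integer, $p_1,\dots,p_d\in(0,1)$, $q_j=1-p_j$, $P=\prod_{j=1}^dp_jq_j^{-1}$, and $\lambda\in(0,1)$. For every integer $n\ge N(P^{1/d},\lambda)$, $$\sum_{k=0}^n\binom nk^dP^k\le\left(\frac{M(P^{1/d},\lambda)}{\sqrt{2\pi}}\right)^{d-1}n^{-\frac{d-1}{2}}\left(1+P^{1/d}\right)^{dn}.$$
   Context: For $\alpha>0$, $\lambda\in(0,1)$: $N(\alpha,\lambda)=\max\{[\alpha/\lambda]+1,[1/(\lambda\alpha)]+1\}$, where $[x]$ is the greatest integer $\le x$, and $M(\alpha,\lambda)=\frac{\alpha+1}{\sqrt\alpha}\cdot\frac1{1-\lambda}$. *)

theory Defs
  imports Complex_Main
begin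

definition N_bound :: "real \<Rightarrow> real \<Rightarrow> nat" where
  "N_bound \<alpha> lam = nat (max (\<lfloor>\<alpha> / lam\<rfloor> + 1) (\<lfloor>1 / (lam * \<alpha>)\<rfloor> + 1))"

definition M_bound :: "real \<Rightarrow> real \<Rightarrow> real" where
  "M_bound \<alpha> lam = (\<alpha> + 1) / sqrt \<alpha> * (1 / (1 - lam))"

end

theory Submission
  imports Defs "HOL-Analysis.Gamma_Function"
begin


lemma ln_lower_aux:
  fixes x :: real assumes "0 \<le> x" "x < 1"
  shows "2*x \<le> ln (1+x) - ln (1-x)"
proof -
  let ?f = "\<lambda>t::real. ln (1+t) - ln (1-t) - 2*t"
  have "?f 0 \<le> ?f x"
  proof (rule DERIV_nonneg_imp_nondecreasing[OF assms(1)])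
    fix t :: real assume t: "0 \<le> t" "t \<le> x"
    have tt: "t*t \<le> t*1" using t assms by (intro mult_left_mono) auto
    have p: "0 < 1 - t^2" using tt t assms by (simp add: power2_eq_square)
    have "DERIV ?f t :> 1/(1+t) - (-1)/(1-t) - 2"
      using t assms by (auto intro!: derivative_eq_intros)
    moreover have "1/(1+t) - (-1)/(1-t) - 2 \<ge> 0"
    proof -
      have "1/(1+t) - (-1)/(1-t) - 2 = 2*t^2/((1+t)*(1-t))"
        using t assms p by (simp add: field_simps power2_eq_square)
      also have "\<dots> \<ge> 0" using t assms by (intro divide_nonneg_pos) auto
      finally show ?thesis .
    qed
    ultimately show "\<exists>y. DERIV ?f t :> y \<and> 0 \<le> y" by blast
  qed
  then show ?thesis by simp
qed

lemma deriv_alg: "0 \<le> (t::real) \<Longrightarrow> t < 1 \<Longrightarrow> 0 < 1 - t^2 \<Longrightarrow> 2 + (2*(3*t^2)*(3*(1-t^2)) - 2*t^3*(3*(-(2*t))))/(3*(1-t^2))^2 - (1/(1+t) - (-1)/(1-t))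
            = 4*t^4/(3*(1-t^2)^2)"
proof -
  assume a: "0 \<le> t" "t < 1" "0 < 1 - t^2"
  have e: "1/(1+t) - (-1)/(1-t) = 2/(1-t^2)" using a by (simp add: field_simps power2_eq_square)
  define D where "D = 1 - t^2"
  have t3: "t^3 = t * t^2" "t^4 = (t^2)^2" by (simp_all add: power3_eq_cube power2_eq_square power4_eq_xxxx)
  have tD: "t^2 = 1 - D" "t*t = 1 - D" by (simp_all add: D_def power2_eq_square)
  have D0: "D > 0" using a D_def by simp
  have "2 + (2*(3*(1-D))*(3*D) - 2*(t*(1-D))*(3*(-(2*t))))/(3*D)^2 - 2/D = 4*(1-D)^2/(3*D^2)"
  proof -
    have "2*(t*(1-D))*(3*(-(2*t))) = -12*(t*t)*(1-D)" by algebra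
    also have "\<dots> = -12*(1-D)^2" by (simp only: tD(2)) (simp add: power2_eq_square algebra_simps)
    finally have "2*(t*(1-D))*(3*(-(2*t))) = -12*(1-D)^2" .
    moreover have "2 + (2*(3*(1-D))*(3*D) - (-12*(1-D)^2))/(3*D)^2 - 2/D = 4*(1-D)^2/(3*D^2)"
      using D0 by (simp add: field_simps) algebra
    ultimately show ?thesis by simp
  qed
  then show ?thesis using e unfolding t3 tD D_def[symmetric] by simp
qed

lemma ln_upper_aux:
  fixes x :: real assumes "0 \<le> x" "x < 1"
  shows "ln (1+x) - ln (1-x) \<le> 2*x + 2*x^3/(3*(1-x^2))"
proof -
  let ?f = "\<lambda>t::real. 2*t + 2*t^3/(3*(1-t^2)) - (ln (1+t) - ln (1-t))"
  have "?f 0 \<le> ?f x"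
  proof (rule DERIV_nonneg_imp_nondecreasing[OF assms(1)])
    fix t :: real assume t: "0 \<le> t" "t \<le> x"
    have tt: "t*t \<le> t*1" using t assms by (intro mult_left_mono) auto
    have p: "0 < 1 - t^2" using tt t assms by (simp add: power2_eq_square)
    have ne: "3*(1-t^2) \<noteq> 0" using p by simp
    have "DERIV ?f t :> 2 + (2*(3*t^2)*(3*(1-t^2)) - 2*t^3*(3*(-(2*t))))/(3*(1-t^2))^2 - (1/(1+t) - (-1)/(1-t))"
      using t assms ne by (auto intro!: derivative_eq_intros simp: power2_eq_square)
    moreover have "2 + (2*(3*t^2)*(3*(1-t^2)) - 2*t^3*(3*(-(2*t))))/(3*(1-t^2))^2 - (1/(1+t) - (-1)/(1-t)) \<ge> 0"
    proof -
      have "2 + (2*(3*t^2)*(3*(1-t^2)) - 2*t^3*(3*(-(2*t))))/(3*(1-t^2))^2 - (1/(1+t) - (-1)/(1-t))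
            = 4*t^4/(3*(1-t^2)^2)"
        using t assms p by (intro deriv_alg) auto
      also have "\<dots> \<ge> 0" using p by simp
      finally show ?thesis .
    qed
    ultimately show "\<exists>y. DERIV ?f t :> y \<and> 0 \<le> y" by blast
  qed
  then show ?thesis by simp
qed

lemma step_bounds:
  fixes x :: real assumes x: "x > 0"
  shows "1 \<le> (x+1/2)*(ln (x+1) - ln x)"
    and "(x+1/2)*(ln (x+1) - ln x) \<le> 1 + 1/(12*x*(x+1))"
proof -
  define y where "y = 1/(2*x+1)"
  have y0: "0 \<le> y" "y < 1" using x by (auto simp: y_def field_simps)
  have "ln (1+y) - ln (1-y) = ln ((2*x+2)/(2*x+1)) - ln (2*x/(2*x+1))"
    using x by (simp add: y_def field_simps)
  also have "\<dots> = ln (((2*x+2)/(2*x+1)) / (2*x/(2*x+1)))"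
    using x by (subst ln_div) auto
  also have "((2*x+2)/(2*x+1)) / (2*x/(2*x+1)) = (x+1)/x"
  proof -
    have "2*x+1 \<noteq> 0" "2*x \<noteq> 0" using x by auto
    then have "((2*x+2)/(2*x+1)) / (2*x/(2*x+1)) = (2*x+2)/(2*x)" by simp
    also have "\<dots> = (x+1)/x" using x by (simp add: divide_simps)
    finally show ?thesis .
  qed
  also have "ln ((x+1)/x) = ln (x+1) - ln x" using x by (simp add: ln_div)
  finally have e: "ln (1+y) - ln (1-y) = ln (x+1) - ln x" .
  have xy: "(x+1/2) * y = 1/2" using x by (simp add: y_def field_simps)
  have "(x+1/2)*(2*y) \<le> (x+1/2)*(ln (x+1) - ln x)"
    using ln_lower_aux[OF y0] e x by (intro mult_left_mono) auto
  then show "1 \<le> (x+1/2)*(ln (x+1) - ln x)" using xy by simp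
  have "(x+1/2)*(ln (x+1) - ln x) \<le> (x+1/2)*(2*y + 2*y^3/(3*(1-y^2)))"
    using ln_upper_aux[OF y0] e x by (intro mult_left_mono) auto
  also have "\<dots> = 1 + 1/(12*x*(x+1))"
  proof -
    have a: "(x+1/2)*(2*y) = 1" using xy by simp
    have "(x+1/2)*(2*y^3) = y^2 * (2*((x+1/2)*y))" by (simp add: power3_eq_cube power2_eq_square algebra_simps)
    then have b0: "(x+1/2)*(2*y^3) = y^2" using xy by simp
    have b: "(x+1/2)*(2*y^3/(3*(1-y^2))) = y^2/(3*(1-y^2))" using b0 by (simp add: divide_simps)
    have yy: "y * (2*x+1) = 1" using x by (simp add: y_def)
    have yy2: "y^2*(2*x+1)^2 = 1" by (simp only: power_mult_distrib[symmetric] yy) simp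
    have "1 - y^2 = y^2 * ((2*x+1)^2 - 1)" using yy2 by (simp add: right_diff_distrib)
    also have "(2*x+1)^2 - 1 = 4*x*(x+1)" by (simp add: algebra_simps power2_eq_square)
    finally have c0: "1 - y^2 = y^2 * (4*x*(x+1))" .
    have yp: "y > 0" using x by (simp add: y_def)
    have c1: "3*(1-y^2) = y^2*(12*x*(x+1))" unfolding c0 by simp
    have c: "y^2/(3*(1-y^2)) = 1/(12*x*(x+1))" unfolding c1 using yp x
      by (intro nonzero_divide_mult_cancel_left) simp
    have "(x+1/2)*(2*y + 2*y^3/(3*(1-y^2))) = (x+1/2)*(2*y) + (x+1/2)*(2*y^3/(3*(1-y^2)))"
      by (rule distrib_left)
    also have "\<dots> = 1 + y^2/(3*(1-y^2))" by (simp only: a b)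
    also have "\<dots> = 1 + 1/(12*x*(x+1))" by (simp only: c)
    finally show ?thesis .
  qed
  finally show "(x+1/2)*(ln (x+1) - ln x) \<le> 1 + 1/(12*x*(x+1))" .
qed

definition sfun :: "nat \<Rightarrow> real" where
  "sfun n = ln (fact n) - (real n + 1/2) * ln (real n) + real n"

lemma ln_fact_Suc: "ln (fact (Suc n) :: real) = ln (real n + 1) + ln (fact n)"
proof -
  have "(fact (Suc n) :: real) = (real n + 1) * fact n" by (simp add: fact_Suc)
  then show ?thesis by (simp add: ln_mult)
qed

lemma sfun_step: "sfun n - sfun (Suc n) = (real n + 1/2) * (ln (real n + 1) - ln (real n)) - 1"
  unfolding sfun_def ln_fact_Suc by (simp add: algebra_simps)

lemma sfun_dec: "n \<ge> 1 \<Longrightarrow> sfun (Suc n) \<le> sfun n"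
  using step_bounds(1)[of "real n"] sfun_step[of n] by simp

lemma sfun_inc: "n \<ge> 1 \<Longrightarrow> sfun n - 1/(12*real n) \<le> sfun (Suc n) - 1/(12*real (Suc n))"
proof -
  assume n: "n \<ge> 1"
  have "sfun n - sfun (Suc n) \<le> 1/(12*real n*(real n+1))"
    using step_bounds(2)[of "real n"] sfun_step[of n] n by simp
  also have "1/(12*real n*(real n+1)) = 1/(12*real n) - 1/(12*real (Suc n))"
    using n by (simp add: field_simps)
  finally show ?thesis by simp
qed

lemma sfun_limit:
  obtains C where "(\<lambda>n. sfun (Suc n)) \<longlonglongrightarrow> C"
    "\<And>n. n \<ge> 1 \<Longrightarrow> C \<le> sfun n" "\<And>n. n \<ge> 1 \<Longrightarrow> sfun n - 1/(12*real n) \<le> C"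
proof -
  define X where "X n = sfun (Suc n)" for n
  define Y where "Y n = sfun (Suc n) - 1/(12*real (Suc n))" for n
  have dX: "decseq X" unfolding X_def by (intro decseq_SucI sfun_dec) simp
  have iY: "incseq Y" unfolding Y_def by (intro incseq_SucI sfun_inc) simp
  have XY: "Y n \<le> X n" for n unfolding X_def Y_def by simp
  have "Y 0 \<le> X i" for i using XY[of i] iY by (meson incseq_def le0 order_trans)
  then obtain C where C: "X \<longlonglongrightarrow> C" "\<forall>i. C \<le> X i" using decseq_convergent[OF dX] by blast
  have "(\<lambda>n. 1/(12*real (Suc n))) \<longlonglongrightarrow> 0"
  proof -
    have "(\<lambda>n. (1/12) * inverse (real (Suc n))) \<longlonglongrightarrow> (1/12) * 0"
      by (intro tendsto_mult tendsto_const LIMSEQ_inverse_real_of_nat)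
    then show ?thesis by (simp add: field_simps)
  qed
  then have "(\<lambda>n. X n - 1/(12*real (Suc n))) \<longlonglongrightarrow> C - 0" by (intro tendsto_diff C(1))
  moreover have "(\<lambda>n. X n - 1/(12*real (Suc n))) = Y" by (simp add: X_def Y_def fun_eq_iff)
  ultimately have YC: "Y \<longlonglongrightarrow> C" by simp
  show ?thesis
  proof (rule that)
    have "X = (\<lambda>n. sfun (Suc n))" by (simp add: X_def fun_eq_iff)
    then show "(\<lambda>n. sfun (Suc n)) \<longlonglongrightarrow> C" using C(1) by simp
    fix n :: nat assume n: "n \<ge> 1"
    then obtain m where m: "n = Suc m" by (cases n) auto
    show "C \<le> sfun n" using C(2) m by (simp add: X_def)
    show "sfun n - 1/(12*real n) \<le> C" using incseq_le[OF iY YC, of m] m by (simp add: Y_def)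
  qed
qed

lemma wallis_alg:
  fixes P A B m :: real assumes "A > 0" "B > 0" "m \<ge> 0"
  shows "P * A^4 / (B^2 * (2*m+1)) * ((4*(m+1)^2) / ((2*m+1)*(2*m+3))) =
         (16*P) * ((m+1)*A)^4 / ((B*((2*m+1)*(2*m+2)))^2 * (2*(m+1)+1))"
proof -
  have nz: "2*m+1 \<noteq> 0" "2*m+3 \<noteq> 0" "m+1 \<noteq> 0" "2*m+2 \<noteq> 0" "2*(m+1)+1 \<noteq> 0" "B \<noteq> 0"
    using assms by auto
  show ?thesis using nz by (simp add: divide_simps) algebra
qed

lemma wallis_closed:
  "(\<Prod>k=1..n. (4*real k^2) / (4*real k^2 - 1)) = 2^(4*n) * (fact n)^4 / ((fact (2*n))^2 * (2*real n+1))"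
proof (induction n)
  case 0 then show ?case by simp
next
  case (Suc n)
  have f2: "(fact (2 * Suc n) :: real) = fact (2*n) * ((2*real n+1) * (2*real n+2))"
  proof -
    have "2 * Suc n = Suc (Suc (2*n))" by simp
    then have "(fact (2 * Suc n) :: real) = (2*real n + 2) * ((2*real n+1) * fact (2*n))"
      by (simp only: fact_Suc) (simp add: algebra_simps)
    then show ?thesis by (simp add: algebra_simps)
  qed
  have f1: "(fact (Suc n) :: real) = (real n + 1) * fact n" by (simp add: fact_Suc)
  have "(\<Prod>k=1..Suc n. (4*real k^2) / (4*real k^2 - 1)) =
        (\<Prod>k=1..n. (4*real k^2) / (4*real k^2 - 1)) * ((4*real (Suc n)^2) / (4*real (Suc n)^2 - 1))"
    by (simp add: prod.nat_ivl_Suc')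
  also have "\<dots> = 2^(4*n) * (fact n)^4 / ((fact (2*n))^2 * (2*real n+1)) * ((4*(real n+1)^2) / ((2*real n+1)*(2*real n+3)))"
    unfolding Suc.IH by (simp add: algebra_simps power2_eq_square)
  also have "\<dots> = 2^(4*Suc n) * (fact (Suc n))^4 / ((fact (2*Suc n))^2 * (2*real (Suc n)+1))"
  proof -
    have pos: "(fact n :: real) > 0" "(fact (2*n) :: real) > 0" by auto
    have "(2::real)^(4*Suc n) = 16 * 2^(4*n)" by (simp add: power_add)
    then show ?thesis unfolding f1 f2 using wallis_alg[OF pos, where P="2^(4*n)" and m="real n"]
      by simp
  qed
  finally show ?case .
qed

lemma ln_wallis:
  assumes m: "m \<ge> 1"
  shows "ln (\<Prod>k=1..m. (4*real k^2) / (4*real k^2 - 1)) =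
         4 * sfun m - 2 * sfun (2*m) - ln 2 - ln (2 + 1 / real m)"
proof -
  have mp: "real m > 0" using m by simp
  have fp: "(fact m :: real) > 0" "(fact (2*m) :: real) > 0" by auto
  have "ln (\<Prod>k=1..m. (4*real k^2) / (4*real k^2 - 1)) =
        ln (2^(4*m) * (fact m)^4 / ((fact (2*m))^2 * (2*real m+1)))"
    by (simp only: wallis_closed)
  also have "\<dots> = real (4*m) * ln 2 + 4 * ln (fact m) - (2 * ln (fact (2*m)) + ln (2*real m+1))"
    using fp mp by (simp add: ln_div ln_mult ln_realpow)
  also have "ln (fact m :: real) = sfun m + (real m + 1/2) * ln (real m) - real m"
    by (simp add: sfun_def)
  also have "ln (fact (2*m) :: real) = sfun (2*m) + (2*real m + 1/2) * (ln 2 + ln (real m)) - 2*real m"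
    using mp by (simp add: sfun_def ln_mult)
  also have "ln (2*real m + 1) = ln (real m) + ln (2 + 1 / real m)"
  proof -
    have e: "2*real m + 1 = real m * (2 + 1 / real m)" using mp by (simp add: field_simps)
    have pos: "2 + 1 / real m > 0" using mp by (simp add: add_pos_pos)
    have "ln (2*real m + 1) = ln (real m * (2 + 1 / real m))" by (simp only: e)
    also have "\<dots> = ln (real m) + ln (2 + 1 / real m)" by (rule ln_mult_pos[OF mp pos])
    finally show ?thesis .
  qed
  finally show ?thesis by (simp add: algebra_simps)
qed

lemma sfun_const:
  assumes "(\<lambda>n. sfun (Suc n)) \<longlonglongrightarrow> C"
  shows "C = ln (2*pi) / 2"
proof -
  let ?W = "\<lambda>n. \<Prod>k=1..n. (4*real k^2) / (4*real k^2 - 1)"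
  have "(\<lambda>n. ?W (Suc n)) \<longlonglongrightarrow> pi/2" using wallis by (rule LIMSEQ_Suc)
  then have L1: "(\<lambda>n. ln (?W (Suc n))) \<longlonglongrightarrow> ln (pi/2)" by (intro tendsto_ln) auto
  have sm: "strict_mono (\<lambda>n::nat. 2*n+1)" by (intro strict_monoI) auto
  have "(\<lambda>n. sfun (Suc (2*n+1))) \<longlonglongrightarrow> C"
    using LIMSEQ_subseq_LIMSEQ[OF assms sm] by (simp add: comp_def)
  then have S2: "(\<lambda>n. sfun (2 * Suc n)) \<longlonglongrightarrow> C" by simp
  have "(\<lambda>n. 2 + inverse (real (Suc n))) \<longlonglongrightarrow> 2 + 0"
    by (intro tendsto_add tendsto_const LIMSEQ_inverse_real_of_nat)
  then have "(\<lambda>n. ln (2 + inverse (real (Suc n)))) \<longlonglongrightarrow> ln (2 + 0)" by (intro tendsto_ln) auto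
  then have L3: "(\<lambda>n. ln (2 + 1 / real (Suc n))) \<longlonglongrightarrow> ln 2" by (simp add: divide_inverse)
  have "(\<lambda>n. 4 * sfun (Suc n) - 2 * sfun (2 * Suc n) - ln 2 - ln (2 + 1 / real (Suc n)))
        \<longlonglongrightarrow> 4 * C - 2 * C - ln 2 - ln 2"
    by (intro tendsto_diff tendsto_mult tendsto_const assms S2 L3)
  moreover have "(\<lambda>n. ln (?W (Suc n))) = (\<lambda>n. 4 * sfun (Suc n) - 2 * sfun (2 * Suc n) - ln 2 - ln (2 + 1 / real (Suc n)))"
    by (intro ext ln_wallis) simp
  ultimately have L2: "(\<lambda>n. ln (?W (Suc n))) \<longlonglongrightarrow> 4 * C - 2 * C - ln 2 - ln 2" by simp
  have "ln (pi/2) = 4 * C - 2 * C - ln 2 - ln 2" using LIMSEQ_unique[OF L1 L2] .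
  moreover have "ln (2*pi) = ln (pi/2) + ln 2 + ln 2"
  proof -
    have "2*pi = (pi/2) * 2 * 2" by simp
    then show ?thesis by (simp only: ln_mult) (simp add: ln_mult ln_div pi_gt_zero)
  qed
  ultimately show ?thesis by simp
qed

lemma sfun_bounds:
  assumes "n \<ge> 1"
  shows "ln (2*pi) / 2 \<le> sfun n" "sfun n - 1/(12*real n) \<le> ln (2*pi) / 2"
proof -
  obtain C where C: "(\<lambda>n. sfun (Suc n)) \<longlonglongrightarrow> C"
    "\<And>n. n \<ge> 1 \<Longrightarrow> C \<le> sfun n" "\<And>n. n \<ge> 1 \<Longrightarrow> sfun n - 1/(12*real n) \<le> C"
    using sfun_limit by blast
  have "C = ln (2*pi) / 2" by (rule sfun_const[OF C(1)])
  then show "ln (2*pi) / 2 \<le> sfun n" "sfun n - 1/(12*real n) \<le> ln (2*pi) / 2"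
    using C(2,3)[OF assms] by auto
qed



lemma gibbs:
  fixes a :: real and m k :: nat
  assumes a: "a > 0" and m: "m \<ge> 1" and k: "k \<ge> 1"
  shows "real (m+k) * ln (real (m+k)) - real m * ln (real m) - real k * ln (real k) + real m * ln a
         \<le> real (m+k) * ln (1+a)"
proof -
  define n where "n = real (m+k)"
  have mp: "real m > 0" and kp: "real k > 0" and np: "n > 0" using m k by (auto simp: n_def)
  have a1: "1 + a > 0" using a by simp
  have x1: "n*a/(real m*(1+a)) > 0" using mp np a a1 by simp
  have x2: "n/(real k*(1+a)) > 0" using kp np a1 by simp
  have i1: "real m * ln (n*a/(real m*(1+a))) \<le> real m * (n*a/(real m*(1+a)) - 1)"
    using ln_le_minus_one[OF x1] mp by (intro mult_left_mono) auto
  have i2: "real k * ln (n/(real k*(1+a))) \<le> real k * (n/(real k*(1+a)) - 1)"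
    using ln_le_minus_one[OF x2] kp by (intro mult_left_mono) auto
  have e1': "real m * (n*a/(real m*(1+a))) = n*a/(1+a)" using mp by simp
  have e2': "real k * (n/(real k*(1+a))) = n/(1+a)" using kp by simp
  have e1: "real m * (n*a/(real m*(1+a)) - 1) = n*a/(1+a) - real m" using e1' by (simp add: right_diff_distrib)
  have e2: "real k * (n/(real k*(1+a)) - 1) = n/(1+a) - real k" using e2' by (simp add: right_diff_distrib)
  have e3: "n*a/(1+a) + n/(1+a) = n"
  proof -
    have "n*a/(1+a) + n/(1+a) = (n*(1+a))/(1+a)" by (simp add: add_divide_distrib[symmetric] algebra_simps)
    then show ?thesis using a1 by simp
  qed
  have l1: "ln (n*a/(real m*(1+a))) = ln n + ln a - ln (real m) - ln (1+a)"
    using np a mp a1 by (simp add: ln_div ln_mult)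
  have l2: "ln (n/(real k*(1+a))) = ln n - ln (real k) - ln (1+a)"
    using np mp kp a1 by (simp add: ln_div ln_mult)
  have nmk: "n = real m + real k" by (simp add: n_def)
  have "real m * (ln n + ln a - ln (real m) - ln (1+a)) + real k * (ln n - ln (real k) - ln (1+a)) \<le> 0"
    using i1[unfolded l1] i2[unfolded l2] e1 e2 e3 nmk by linarith
  then show ?thesis unfolding n_def[symmetric] nmk by (simp add: algebra_simps)
qed

lemma ln_fact_upper: "n \<ge> 1 \<Longrightarrow> ln (fact n :: real) \<le> ln (2*pi)/2 + 1/(12*real n) + real n * ln (real n) + ln (real n)/2 - real n"
  using sfun_bounds(2)[of n] unfolding sfun_def by (simp add: algebra_simps)

lemma ln_fact_lower: "n \<ge> 1 \<Longrightarrow> ln (2*pi)/2 + real n * ln (real n) + ln (real n)/2 - real n \<le> ln (fact n :: real)"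
  using sfun_bounds(1)[of n] unfolding sfun_def by (simp add: algebra_simps)

lemma mode_bound:
  fixes a lam :: real and n m :: nat
  assumes a: "a > 0" and lam: "0 < lam" "lam < 1" and m: "m \<ge> 1" "m < n"
    and H: "exp (1/(6*real n)) * real n^2 * a * (1-lam)^2 \<le> real m * real (n-m) * (1+a)^2"
  shows "real (n choose m) * a^m \<le> (a+1)/sqrt a * (1/(1-lam)) / sqrt (2*pi) / sqrt (real n) * (1+a)^n"
proof -
  define k where "k = n - m"
  have k1: "k \<ge> 1" and nmk: "n = m + k" using m by (auto simp: k_def)
  have n1: "n \<ge> 1" using m by simp
  have np: "real n > 0" "real m > 0" "real k > 0" using m k1 by auto
  have Cp: "real (n choose m) > 0" using m by simp
  have lnC: "ln (real (n choose m)) = ln (fact n) - ln (fact m) - ln (fact k)"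
  proof -
    have "real (n choose m) = fact n / (fact m * fact k)" unfolding k_def using m by (simp add: binomial_fact)
    then show ?thesis by (simp add: ln_div ln_mult)
  qed
  have U: "ln (fact n :: real) \<le> ln (2*pi)/2 + 1/(12*real n) + real n * ln (real n) + ln (real n)/2 - real n"
    using ln_fact_upper n1 by blast
  have L1: "ln (2*pi)/2 + real m * ln (real m) + ln (real m)/2 - real m \<le> ln (fact m :: real)"
    using ln_fact_lower m by blast
  have L2: "ln (2*pi)/2 + real k * ln (real k) + ln (real k)/2 - real k \<le> ln (fact k :: real)"
    using ln_fact_lower k1 by blast
  have G: "real n * ln (real n) - real m * ln (real m) - real k * ln (real k) + real m * ln a \<le> real n * ln (1+a)"
    using gibbs[OF a m(1) k1] unfolding nmk[symmetric] .
  have lp: "1 - lam > 0" using lam by simp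
  have Hl: "1/(6*real n) + 2 * ln (real n) + ln a + 2 * ln (1-lam) \<le> ln (real m) + ln (real k) + 2 * ln (1+a)"
  proof -
    have pos: "0 < exp (1/(6*real n)) * real n^2 * a * (1-lam)^2" using np a lp by simp
    have "ln (exp (1/(6*real n)) * real n^2 * a * (1-lam)^2) \<le> ln (real m * real k * (1+a)^2)"
    proof -
      have pos2: "0 < real m * real k * (1+a)^2" using np a by simp
      have H': "exp (1/(6*real n)) * real n^2 * a * (1-lam)^2 \<le> real m * real k * (1+a)^2"
        using H unfolding k_def .
      show ?thesis using H' by (subst ln_le_cancel_iff[OF pos pos2])
    qed
    then show ?thesis using np a lp by (simp add: ln_mult ln_realpow)
  qed
  have six: "1/(6*real n) = 2 * (1/(12*real n))" by simp
  have nk: "real n = real m + real k" using nmk by simp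
  have "ln (real (n choose m) * a^m) = ln (real (n choose m)) + real m * ln a"
    using Cp a by (simp add: ln_mult ln_realpow)
  also have "\<dots> \<le> ln (a+1) - ln a / 2 - ln (1-lam) - ln (2*pi)/2 - ln (real n)/2 + real n * ln (1+a)"
    using lnC U L1 L2 G Hl six nk by (simp add: algebra_simps) linarith?
  also have "\<dots> = ln ((a+1)/sqrt a * (1/(1-lam)) / sqrt (2*pi) / sqrt (real n) * (1+a)^n)"
    using a lp np by (simp add: ln_mult ln_div ln_sqrt ln_realpow pi_gt_zero add.commute)
  finally show ?thesis using Cp a lp np by (subst (asm) ln_le_cancel_iff) auto
qed

lemma exp_small: "real n > 0 \<Longrightarrow> exp (1/(6*real n)) \<le> (real n + 1) / real n"
proof -
  assume np: "real n > 0"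
  have "1 \<le> (real n + 1/2) * (ln (real n + 1) - ln (real n))" using step_bounds(1)[OF np] .
  then have "1/(real n + 1/2) \<le> ln (real n + 1) - ln (real n)" using np by (simp add: field_simps)
  moreover have "1/(6*real n) \<le> 1/(real n + 1/2)" using np
    by (intro divide_left_mono) (auto simp: of_nat_less_0_iff)
  ultimately have "1/(6*real n) \<le> ln ((real n + 1) / real n)" using np by (simp add: ln_div)
  then have "exp (1/(6*real n)) \<le> exp (ln ((real n + 1) / real n))" by simp
  also have "\<dots> = (real n + 1) / real n" using np by simp
  finally show ?thesis .
qed

lemma quad_min:
  fixes u lo hi S :: real
  assumes "lo \<le> u" "u \<le> hi"
  shows "u*(S-u) \<ge> min (lo*(S-lo)) (hi*(S-hi))"
proof (cases "S - u - lo \<ge> 0")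
  case True
  have "u*(S-u) - lo*(S-lo) = (u-lo)*(S-u-lo)" by (simp add: algebra_simps)
  also have "\<dots> \<ge> 0" using True assms by simp
  finally show ?thesis by simp
next
  case False
  have "u*(S-u) - hi*(S-hi) = (hi-u)*(u+hi-S)" by (simp add: algebra_simps)
  also have "\<dots> \<ge> 0" using False assms by simp
  finally show ?thesis by simp
qed

lemma H_lemma:
  fixes a lam :: real and n m :: nat
  assumes a: "a > 0" and lam: "0 < lam" "lam < 1" and c1: "a < real n * lam" and c2: "1 < real n * lam * a"
    and mr: "real m \<le> (real n + 1) * a / (1+a)" "(real n + 1) * a / (1+a) - 1 < real m" and mn: "m < n"
  shows "exp (1/(6*real n)) * real n^2 * a * (1-lam)^2 \<le> real m * real (n-m) * (1+a)^2"
proof -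
  have np: "real n > 0" using mn by simp
  have a1: "1 + a > 0" using a by simp
  define u where "u = (1+a) * real m"
  define S where "S = (1+a) * real n"
  have ulo: "real n * a - 1 \<le> u"
  proof -
    have "(real n + 1) * a / (1+a) - 1 < real m" by (rule mr(2))
    then have "(real n + 1) * a - (1+a) < (1+a) * real m" using a1 by (simp add: field_simps)
    then show ?thesis unfolding u_def by (simp add: algebra_simps)
  qed
  have uhi: "u \<le> real n * a + a"
  proof -
    have "(1+a) * real m \<le> (real n + 1) * a" using mr(1) a1 by (simp add: field_simps)
    then show ?thesis unfolding u_def by (simp add: algebra_simps)
  qed
  have fu: "u*(S-u) = real m * real (n-m) * (1+a)^2"
    using mn unfolding u_def S_def by (simp add: of_nat_diff algebra_simps power2_eq_square)
  have flo: "(real n * a - 1)*(S - (real n * a - 1)) = (real n * a - 1) * (real n + 1)"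
    unfolding S_def by (simp add: algebra_simps)
  have fhi: "(real n * a + a)*(S - (real n * a + a)) = a * (real n + 1) * (real n - a)"
    unfolding S_def by (simp add: algebra_simps)
  have lp: "0 \<le> 1 - lam" "1 - lam \<le> 1" using lam by auto
  have sq: "(1-lam)^2 \<le> 1 - lam" using lp by (simp add: power2_eq_square mult_left_le)
  have B: "exp (1/(6*real n)) * real n^2 * a * (1-lam)^2 \<le> (real n + 1) * real n * a * (1-lam)^2"
  proof -
    have "exp (1/(6*real n)) * real n^2 \<le> (real n + 1) / real n * real n^2"
      using exp_small[OF np] by (intro mult_right_mono) auto
    also have "\<dots> = (real n + 1) * real n" using np by (simp add: power2_eq_square)
    finally have "exp (1/(6*real n)) * real n^2 \<le> (real n + 1) * real n" .
    then show ?thesis using a by (intro mult_right_mono) auto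
  qed
  have Blo: "(real n + 1) * real n * a * (1-lam)^2 \<le> (real n * a - 1) * (real n + 1)"
  proof -
    have "real n * a * (1-lam)^2 \<le> real n * a * (1-lam)" using sq np a by (intro mult_left_mono) auto
    also have "\<dots> \<le> real n * a - 1" using c2 by (simp add: algebra_simps)
    finally have "real n * a * (1-lam)^2 \<le> real n * a - 1" .
    then have "(real n + 1) * (real n * a * (1-lam)^2) \<le> (real n + 1) * (real n * a - 1)"
      by (intro mult_left_mono) auto
    then show ?thesis by (simp add: algebra_simps)
  qed
  have Bhi: "(real n + 1) * real n * a * (1-lam)^2 \<le> a * (real n + 1) * (real n - a)"
  proof -
    have "real n * (1-lam)^2 \<le> real n * (1-lam)" using sq np by (intro mult_left_mono) auto
    also have "\<dots> \<le> real n - a" using c1 by (simp add: algebra_simps)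
    finally have "real n * (1-lam)^2 \<le> real n - a" .
    then have "(a * (real n + 1)) * (real n * (1-lam)^2) \<le> (a * (real n + 1)) * (real n - a)"
      using a np by (intro mult_left_mono) auto
    then show ?thesis by (simp add: algebra_simps)
  qed
  have "min ((real n * a - 1)*(S - (real n * a - 1))) ((real n * a + a)*(S - (real n * a + a))) \<le> u*(S-u)"
    by (rule quad_min[OF ulo uhi])
  then show ?thesis using fu flo fhi B Blo Bhi by linarith
qed

lemma unimodal:
  fixes f :: "nat \<Rightarrow> real"
  assumes up: "\<And>k. k < m \<Longrightarrow> f k \<le> f (Suc k)"
    and down: "\<And>k. m \<le> k \<Longrightarrow> k < n \<Longrightarrow> f (Suc k) \<le> f k" and kn: "k \<le> n"
  shows "f k \<le> f m"
proof (cases "k \<le> m")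
  case True
  have "\<forall>j. j \<le> m \<longrightarrow> f (m-j) \<le> f m"
  proof (intro allI)
    fix j show "j \<le> m \<longrightarrow> f (m-j) \<le> f m"
    proof (induction j)
      case 0 then show ?case by simp
    next
      case (Suc j)
      show ?case
      proof
        assume j: "Suc j \<le> m"
        have "f (m - Suc j) \<le> f (Suc (m - Suc j))" using j by (intro up) auto
        also have "Suc (m - Suc j) = m - j" using j by simp
        finally show "f (m - Suc j) \<le> f m" using Suc j by simp
      qed
    qed
  qed
  then show ?thesis using True by (metis diff_diff_cancel diff_le_self)
next
  case False
  have "\<forall>j. m + j \<le> n \<longrightarrow> f (m+j) \<le> f m"
  proof (intro allI)
    fix j show "m + j \<le> n \<longrightarrow> f (m+j) \<le> f m"
    proof (induction j)
      case 0 then show ?case by simp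
    next
      case (Suc j)
      show ?case
      proof
        assume j: "m + Suc j \<le> n"
        have "f (Suc (m + j)) \<le> f (m + j)" using j by (intro down) auto
        then show "f (m + Suc j) \<le> f m" using Suc j by simp
      qed
    qed
  qed
  then show ?thesis using False kn by (metis le_add_diff_inverse nat_le_linear)
qed

lemma binom_ratio: "k < n \<Longrightarrow> real (n choose Suc k) * real (Suc k) = real (n choose k) * real (n - k)"
proof -
  assume "k < n"
  have "Suc k * (n choose Suc k) = n * ((n - 1) choose k)"
    using times_binomial_minus1_eq[of "Suc k" n] by simp
  also have "\<dots> = (n - k) * (n choose k)" by (rule binomial_absorb_comp[symmetric])
  finally have "(n choose Suc k) * Suc k = (n choose k) * (n - k)" by (simp add: mult.commute)
  then have "real ((n choose Suc k) * Suc k) = real ((n choose k) * (n - k))" by simp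
  then show ?thesis by (simp only: of_nat_mult)
qed



lemma max_bound:
  fixes a lam :: real and n k :: nat
  assumes a: "a > 0" and lam: "0 < lam" "lam < 1" and c1: "a < real n * lam" and c2: "1 < real n * lam * a"
    and kn: "k \<le> n"
  shows "real (n choose k) * a^k \<le> M_bound a lam / sqrt (2*pi) / sqrt (real n) * (1+a)^n"
proof -
  define r where "r = (real n + 1) * a / (1+a)"
  define m where "m = nat \<lfloor>r\<rfloor>"
  have a1: "1 + a > 0" using a by simp
  have r0: "r \<ge> 0" using a unfolding r_def by simp
  have rm: "real m = of_int \<lfloor>r\<rfloor>" using r0 unfolding m_def by simp
  have mr1: "real m \<le> r" using rm by simp
  have mr2: "r - 1 < real m" using rm by linarith
  have na1: "real n * a > 1"
  proof -
    have "real n * lam \<le> real n * 1" using lam by (intro mult_left_mono) auto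
    then have "real n * lam * a \<le> real n * a" using a by (intro mult_right_mono) auto
    then show ?thesis using c2 by linarith
  qed
  have "real n * lam \<le> real n * 1" using lam by (intro mult_left_mono) auto
  then have an: "a < real n" using c1 by simp
  have r1: "r \<ge> 1" unfolding r_def using a1 na1 by (simp add: field_simps)
  have m1: "m \<ge> 1" using r1 unfolding m_def by linarith
  have rn: "r < real n" unfolding r_def using a1 an by (simp add: field_simps)
  have mn: "m < n" using mr1 rn by linarith
  have H: "exp (1/(6*real n)) * real n^2 * a * (1-lam)^2 \<le> real m * real (n-m) * (1+a)^2"
    using H_lemma[OF a lam c1 c2 _ _ mn] mr1 mr2 unfolding r_def by blast
  have MB: "real (n choose m) * a^m \<le> M_bound a lam / sqrt (2*pi) / sqrt (real n) * (1+a)^n"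
    using mode_bound[OF a lam m1 mn H] unfolding M_bound_def by simp
  define f where "f j = real (n choose j) * a^j" for j
  have step: "f (Suc j) = f j * (real (n - j) * a / real (Suc j))" if "j < n" for j
  proof -
    have "f (Suc j) = real (n choose Suc j) * real (Suc j) / real (Suc j) * a^Suc j"
      unfolding f_def by simp
    also have "\<dots> = f j * (real (n - j) * a / real (Suc j))"
      unfolding binom_ratio[OF that] f_def by (simp add: field_simps)
    finally show ?thesis .
  qed
  have f0: "f j \<ge> 0" for j unfolding f_def using a by simp
  have up: "f j \<le> f (Suc j)" if "j < m" for j
  proof -
    have jn: "j < n" using that mn by simp
    have "real (Suc j) \<le> r" using that mr1 by linarith
    then have "real (Suc j) * (1+a) \<le> (real n + 1) * a" unfolding r_def using a1 by (simp add: field_simps)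
    then have h: "real (Suc j) \<le> (real n - real j) * a" by (simp add: algebra_simps)
    have eq: "real (n - j) = real n - real j" using jn by simp
    have "real (Suc j) \<le> real (n - j) * a" unfolding eq by (rule h)
    then have "1 \<le> real (n - j) * a / real (Suc j)"
      by (metis le_divide_eq_1_pos of_nat_0_less_iff zero_less_Suc)
    then have "f j * 1 \<le> f j * (real (n - j) * a / real (Suc j))" using mult_left_mono[OF _ f0] by blast
    then show ?thesis using step[OF jn] by simp
  qed
  have down: "f (Suc j) \<le> f j" if "m \<le> j" "j < n" for j
  proof -
    have "r < real (Suc j)" using that mr2 by linarith
    then have "(real n + 1) * a < real (Suc j) * (1+a)" unfolding r_def using a1 by (simp add: field_simps)
    then have h: "(real n - real j) * a < real (Suc j)" by (simp add: algebra_simps)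
    have eq: "real (n - j) = real n - real j" using that by simp
    have "real (n - j) * a < real (Suc j)" unfolding eq by (rule h)
    then have "real (n - j) * a / real (Suc j) \<le> 1"
      by (metis less_imp_le divide_le_eq_1_pos of_nat_0_less_iff zero_less_Suc)
    then have "f j * (real (n - j) * a / real (Suc j)) \<le> f j * 1" using mult_left_mono[OF _ f0] by blast
    then show ?thesis using step[OF that(2)] by simp
  qed
  have "f k \<le> f m" using unimodal[of m f n k] up down kn by blast
  then show ?thesis using MB unfolding f_def by simp
qed

lemma powr_sqrt_eq:
  fixes n :: real and d :: nat assumes n: "n > 0" and d: "d \<ge> 1"
  shows "(1 / sqrt n)^(d-1) = n powr (- (real d - 1) / 2)"
proof -
  have e: "- (real d - 1) / 2 = - ((real d - 1) / 2)" by (simp only: minus_divide_left)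
  have "n powr (- (real d - 1) / 2) = inverse (n powr ((real d - 1) / 2))"
    unfolding e by (rule powr_minus)
  also have "n powr ((real d - 1) / 2) = (n powr (1/2)) powr (real (d-1))"
    using d by (simp add: powr_powr of_nat_diff)
  also have "\<dots> = (sqrt n) powr (real (d-1))" using n by (simp add: powr_half_sqrt)
  also have "\<dots> = (sqrt n)^(d-1)" using n by (simp add: powr_realpow)
  finally show ?thesis by (simp add: power_one_over inverse_eq_divide)
qed

theorem proposition14:
  fixes d n :: nat and p :: "nat \<Rightarrow> real" and lam :: real
  assumes "d \<ge> 3"
    and "\<And>j. j \<in> {1..d} \<Longrightarrow> 0 < p j \<and> p j < 1"
    and "0 < lam" "lam < 1"
    and "n \<ge> N_bound ((\<Prod>j=1..d. p j / (1 - p j)) powr (1 / real d)) lam"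
  shows "(\<Sum>k=0..n. real (n choose k) ^ d * (\<Prod>j=1..d. p j / (1 - p j)) ^ k)
    \<le> (M_bound ((\<Prod>j=1..d. p j / (1 - p j)) powr (1 / real d)) lam / sqrt (2 * pi)) ^ (d - 1)
       * real n powr (- (real d - 1) / 2)
       * (1 + (\<Prod>j=1..d. p j / (1 - p j)) powr (1 / real d)) ^ (d * n)"
proof -
  define P where "P = (\<Prod>j=1..d. p j / (1 - p j))"
  define a where "a = P powr (1 / real d)"
  have d1: "d \<ge> 1" and dp: "real d > 0" using assms(1) by auto
  have P0: "P > 0" unfolding P_def using assms(2) by (intro prod_pos) auto
  have a0: "a > 0" unfolding a_def using P0 by simp
  have aP: "a^d = P"
  proof -
    have "a^d = a powr real d" using a0 by (simp add: powr_realpow)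
    also have "\<dots> = P powr (1 / real d * real d)" unfolding a_def by (simp add: powr_powr)
    also have "\<dots> = P" using dp P0 by simp
    finally show ?thesis .
  qed
  have lam: "0 < lam" "lam < 1" using assms(3,4) by auto
  have Nb: "nat (max (\<lfloor>a / lam\<rfloor> + 1) (\<lfloor>1 / (lam * a)\<rfloor> + 1)) \<le> n"
    using assms(5) unfolding N_bound_def a_def P_def .
  then have "max (\<lfloor>a / lam\<rfloor> + 1) (\<lfloor>1 / (lam * a)\<rfloor> + 1) \<le> int n" by (simp add: nat_le_iff)
  then have f1: "\<lfloor>a / lam\<rfloor> + 1 \<le> int n" and f2: "\<lfloor>1 / (lam * a)\<rfloor> + 1 \<le> int n" by auto
  have "a / lam < real n"
  proof -
    have "a / lam < real_of_int (\<lfloor>a / lam\<rfloor> + 1)" by linarith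
    also have "\<dots> \<le> real_of_int (int n)" using f1 by (simp only: of_int_le_iff)
    finally show ?thesis by simp
  qed
  then have c1: "a < real n * lam" using lam by (simp add: field_simps)
  have "1 / (lam * a) < real n"
  proof -
    have "1 / (lam * a) < real_of_int (\<lfloor>1 / (lam * a)\<rfloor> + 1)" by linarith
    also have "\<dots> \<le> real_of_int (int n)" using f2 by (simp only: of_int_le_iff)
    finally show ?thesis by simp
  qed
  then have c2: "1 < real n * lam * a" using lam a0 by (simp add: field_simps)
  have np: "real n > 0" using c1 a0 lam by (metis mult_eq_0_iff not_less_iff_gr_or_eq of_nat_0_less_iff order.strict_trans gr0I of_nat_0)
  define K where "K = M_bound a lam / sqrt (2*pi) / sqrt (real n)"
  define B where "B = K * (1+a)^n"
  define c where "c k = real (n choose k) * a^k" for k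
  have cB: "c k \<le> B" if "k \<le> n" for k
    unfolding c_def B_def K_def using max_bound[OF a0 lam c1 c2 that] .
  have c0: "c k \<ge> 0" for k unfolding c_def using a0 by simp
  have LHS: "(\<Sum>k=0..n. real (n choose k) ^ d * P ^ k) = (\<Sum>k=0..n. c k ^ d)"
  proof (intro sum.cong refl)
    fix k
    have "c k ^ d = real (n choose k) ^ d * (a ^ k) ^ d" unfolding c_def by (simp add: power_mult_distrib)
    also have "(a ^ k) ^ d = (a ^ d) ^ k" by (simp add: power_mult[symmetric] mult.commute)
    finally show "real (n choose k) ^ d * P ^ k = c k ^ d" using aP by simp
  qed
  have "(\<Sum>k=0..n. c k ^ d) \<le> (\<Sum>k=0..n. c k * B ^ (d-1))"
  proof (intro sum_mono)
    fix k assume k: "k \<in> {0..n}"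
    have "c k ^ d = c k * c k ^ (d-1)" using d1 by (metis Suc_diff_le diff_Suc_1 power_Suc)
    also have "\<dots> \<le> c k * B ^ (d-1)" using c0 cB k by (intro mult_left_mono power_mono) auto
    finally show "c k ^ d \<le> c k * B ^ (d-1)" .
  qed
  also have "\<dots> = (\<Sum>k=0..n. c k) * B ^ (d-1)" by (simp add: sum_distrib_right)
  also have "(\<Sum>k=0..n. c k) = (1+a)^n"
  proof -
    have "(a + 1)^n = (\<Sum>k\<le>n. real (n choose k) * a^k * 1^(n-k))" by (rule binomial_ring)
    then show ?thesis unfolding c_def by (simp add: atLeast0AtMost add.commute)
  qed
  also have "(1+a)^n * B^(d-1) = K^(d-1) * (1+a)^(d*n)"
  proof -
    have "(1+a)^n * B^(d-1) = K^(d-1) * ((1+a)^n * ((1+a)^n)^(d-1))" unfolding B_def by (simp add: power_mult_distrib)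
    also have "(1+a)^n * ((1+a)^n)^(d-1) = (1+a)^(n + n*(d-1))" by (simp add: power_add power_mult)
    also have "n + n*(d-1) = d*n" using d1 by (simp add: algebra_simps) (metis Suc_diff_le diff_Suc_1 mult_Suc_right add.commute)?
    finally show ?thesis .
  qed
  also have "K^(d-1) = (M_bound a lam / sqrt (2*pi))^(d-1) * real n powr (- (real d - 1) / 2)"
  proof -
    have Ke: "K = (M_bound a lam / sqrt (2*pi)) * (1 / sqrt (real n))" unfolding K_def by simp
    have "K^(d-1) = (M_bound a lam / sqrt (2*pi))^(d-1) * (1 / sqrt (real n))^(d-1)"
      unfolding Ke by (rule power_mult_distrib)
    then show ?thesis using powr_sqrt_eq[OF np d1] by simp
  qed
  finally have X: "(\<Sum>k=0..n. c k ^ d) \<le> (M_bound a lam / sqrt (2*pi))^(d-1) * real n powr (- (real d - 1) / 2) * (1+a)^(d*n)" .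
  show ?thesis unfolding P_def[symmetric] a_def[symmetric] using LHS X by simp
qed


end
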